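(* The Markov spectrum of $\mathbb{Q}((1/T))$ is $\mathcal{M}=\{1,2,3,\dots\}\cup\{\infty\}$.
   Context: $\mathbb{Q}((1/T))$ is the field of formal Laurent series $\sum_{i=-\infty}^m a_iT^i$ with $a_i\in\mathbb{Q}$. For nonzero $\alpha$ with leading term $a_mT^m$, $a_m\ne0$, set $\deg\alpha=m$, and $\deg0=-\infty$. A binary quadratic form over $\mathbb{Q}((1/T))$ is $Q(X,Y)=AX^2+BXY+CY^2$ with $A,B,C\in\mathbb{Q}((1/T))$ not all in $\mathbb{Q}(T)$; its discriminant is $D=B^2-4AC$. It is indefinite if $D\neq0$ and $D$ is a square in $\mathbb{Q}((1/T))$. Put $m(Q)=\inf\{\deg Q(X,Y): X,Y\in\mathbb{Q}[T],\ (X,Y)\ne(0,0)\}\in\mathbb{Z}\cup\{-\infty\}$. The Markov spectrum is $\mathcal{M}=\{\tfrac{\deg D}{2}-m(Q): Q \text{ an indefinite binary quadratic form}\}$, where the value is $+\infty$ when $m(Q)=-\infty$. *)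

theory Defs
  imports "HOL-Computational_Algebra.Formal_Laurent_Series" "HOL-Computational_Algebra.Polynomial"
    "HOL-Library.Extended_Real"
begin

text \<open>The field Q((1/T)) is modelled as rat fls, Laurent series in X = 1/T with
  finitely many negative powers of X (= finitely many positive powers of T).
  T itself is fls_X_inv.\<close>

type_synonym QT = "rat fls"

definition poly_emb :: "rat poly \<Rightarrow> QT" where
  "poly_emb p = (\<Sum>i\<le>degree p. fls_const (coeff p i) * fls_X_inv ^ i)"

definition degT :: "QT \<Rightarrow> ereal" where
  "degT a = (if a = 0 then -\<infinity> else ereal (real_of_int (- fls_subdegree a)))"

definition in_QT_rat :: "QT \<Rightarrow> bool" where
  "in_QT_rat a \<longleftrightarrow> (\<exists>p q. q \<noteq> 0 \<and> a * poly_emb q = poly_emb p)"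

definition qform :: "QT \<Rightarrow> QT \<Rightarrow> QT \<Rightarrow> QT \<Rightarrow> QT \<Rightarrow> QT" where
  "qform A B C x y = A * x^2 + B * x * y + C * y^2"

definition is_bqf :: "QT \<Rightarrow> QT \<Rightarrow> QT \<Rightarrow> bool" where
  "is_bqf A B C \<longleftrightarrow> \<not> (in_QT_rat A \<and> in_QT_rat B \<and> in_QT_rat C)"

definition disc :: "QT \<Rightarrow> QT \<Rightarrow> QT \<Rightarrow> QT" where
  "disc A B C = B^2 - 4 * A * C"

definition indefinite :: "QT \<Rightarrow> QT \<Rightarrow> QT \<Rightarrow> bool" where
  "indefinite A B C \<longleftrightarrow> disc A B C \<noteq> 0 \<and> (\<exists>s. disc A B C = s^2)"

definition min_deg :: "QT \<Rightarrow> QT \<Rightarrow> QT \<Rightarrow> ereal" where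
  "min_deg A B C = Inf {degT (qform A B C (poly_emb X) (poly_emb Y)) | X Y :: rat poly.
      X \<noteq> 0 \<or> Y \<noteq> 0}"

definition markov_value :: "QT \<Rightarrow> QT \<Rightarrow> QT \<Rightarrow> ereal" where
  "markov_value A B C = degT (disc A B C) / 2 - min_deg A B C"

definition markov_spectrum :: "ereal set" where
  "markov_spectrum = {markov_value A B C | A B C. is_bqf A B C \<and> indefinite A B C}"

end

theory Submission
  imports Defs
begin

unbundle fps_syntax


lemma poly_emb_nth: "poly_emb p $$ n = (if n \<le> 0 then coeff p (nat (-n)) else 0)"
proof -
  have "poly_emb p $$ n = (\<Sum>i\<le>degree p. coeff p i * (if n = - int i then 1 else 0))"
    unfolding poly_emb_def fls_nth_sum by (simp add: fls_mult_const_nth)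
  also have "\<dots> = (\<Sum>i\<in>{..degree p} \<inter> {i. n = - int i}. coeff p i)"
    by (simp add: sum.inter_restrict if_distrib cong: if_cong)
  also have "\<dots> = (if n \<le> 0 then coeff p (nat (-n)) else 0)"
  proof (cases "n \<le> 0")
    case True
    then have "{..degree p} \<inter> {i. n = - int i} = (if nat (-n) \<le> degree p then {nat (-n)} else {})"
      by auto
    then show ?thesis using True by (auto simp: coeff_eq_0)
  next
    case False
    then have "{..degree p} \<inter> {i. n = - int i} = {}" by auto
    then show ?thesis using False by simp
  qed
  finally show ?thesis .
qed

lemma poly_emb_eqI: "(\<And>n. f $$ n = (if n \<le> 0 then coeff p (nat (-n)) else 0)) \<Longrightarrow> poly_emb p = f"
  by (rule fls_eqI) (simp add: poly_emb_nth)

lemma poly_emb_0 [simp]: "poly_emb 0 = 0"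
  by (rule fls_eqI) (simp add: poly_emb_nth)

lemma poly_emb_1 [simp]: "poly_emb 1 = 1"
  by (rule fls_eqI) (auto simp: poly_emb_nth coeff_1)

lemma poly_emb_add: "poly_emb (p + q) = poly_emb p + poly_emb q"
  by (rule fls_eqI) (simp add: poly_emb_nth)

lemma poly_emb_diff: "poly_emb (p - q) = poly_emb p - poly_emb q"
  by (rule fls_eqI) (simp add: poly_emb_nth)

lemma poly_emb_smult: "poly_emb (smult a p) = fls_const a * poly_emb p"
  by (rule fls_eqI) (simp add: poly_emb_nth)

lemma poly_emb_pCons0: "poly_emb (pCons 0 p) = fls_X_inv * poly_emb p"
proof (rule fls_eqI)
  fix n
  have "(fls_X_inv * poly_emb p) $$ n = poly_emb p $$ (n + 1)"
    using fls_X_inv_power_times_conv_shift(1)[of 1 "poly_emb p"] by simp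
  then show "poly_emb (pCons 0 p) $$ n = (fls_X_inv * poly_emb p) $$ n"
    by (auto simp: poly_emb_nth coeff_pCons split: nat.split) (auto simp: nat_diff_distrib' nat_eq_iff)
qed

lemma poly_emb_mult: "poly_emb (p * q) = poly_emb p * poly_emb q"
proof (induction p)
  case 0
  then show ?case by simp
next
  case (pCons a p)
  have "pCons a p * q = smult a q + pCons 0 (p * q)" by simp
  then have "poly_emb (pCons a p * q) = fls_const a * poly_emb q + fls_X_inv * (poly_emb p * poly_emb q)"
    by (simp only: poly_emb_add poly_emb_smult poly_emb_pCons0 pCons.IH)
  moreover have "poly_emb (pCons a p) = fls_const a + fls_X_inv * poly_emb p"
  proof -
    have "pCons a p = [:a:] + pCons 0 p" by simp
    moreover have "poly_emb [:a:] = fls_const a"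
      by (rule fls_eqI) (auto simp: poly_emb_nth coeff_pCons split: nat.split)
    ultimately show ?thesis by (simp only: poly_emb_add poly_emb_pCons0)
  qed
  ultimately show ?case by (simp add: algebra_simps)
qed

lemma poly_emb_power: "poly_emb (p ^ n) = poly_emb p ^ n"
  by (induction n) (simp_all add: poly_emb_mult)

lemma poly_emb_nonzero: "p \<noteq> 0 \<Longrightarrow> poly_emb p \<noteq> 0"
  by (metis coeff_0 leading_coeff_0_iff nat_int neg_0_le_iff_le of_nat_0_le_iff poly_emb_nth fls_zero_nth minus_minus)

lemma poly_emb_subdeg: "p \<noteq> 0 \<Longrightarrow> fls_subdegree (poly_emb p) \<le> - int (degree p)"
  by (rule fls_subdegree_leI) (simp add: poly_emb_nth)

lemma linsys:
  fixes a :: "nat \<Rightarrow> nat \<Rightarrow> rat"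
  shows "m < n \<Longrightarrow> \<exists>c. (\<exists>i<n. c i \<noteq> 0) \<and> (\<forall>j<m. (\<Sum>i<n. a j i * c i) = 0)"
proof (induction n arbitrary: m a)
  case 0
  then show ?case by simp
next
  case (Suc n')
  show ?case
  proof (cases "\<forall>j<m. a j n' = 0")
    case True
    define c where "c = (\<lambda>i. if i = n' then (1::rat) else 0)"
    have "(\<Sum>i<Suc n'. a j i * c i) = a j n'" for j
      by (simp add: c_def)
    then show ?thesis using True by (intro exI[of _ c]) (auto simp: c_def)
  next
    case False
    then obtain j0 where j0: "j0 < m" "a j0 n' \<noteq> 0" by auto
    define r where "r = (\<lambda>j. if j = j0 then m - 1 else j)"
    define a' where "a' = (\<lambda>j i. a (r j) i - a (r j) n' * a j0 i / a j0 n')"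
    have "m - 1 < n'" using Suc.prems j0 by linarith
    from Suc.IH[OF this, of a'] obtain c' where
      c': "\<exists>i<n'. c' i \<noteq> 0" "\<forall>j<m-1. (\<Sum>i<n'. a' j i * c' i) = 0" by blast
    define t where "t = (\<Sum>i<n'. a j0 i * c' i)"
    define c where "c = (\<lambda>i. if i < n' then c' i else - t / a j0 n')"
    have split: "(\<Sum>i<Suc n'. a j i * c i) = (\<Sum>i<n'. a j i * c' i) - a j n' * t / a j0 n'" for j
      by (simp add: c_def)
    have eq: "(\<Sum>i<Suc n'. a j i * c i) = 0" if "j < m" for j
    proof (cases "j = j0")
      case True
      then show ?thesis using j0 unfolding split by (simp add: t_def)
    next
      case False
      define j' where "j' = (if j = m - 1 then j0 else j)"
      have j': "j' < m - 1" "r j' = j"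
        using False that j0 by (auto simp: j'_def r_def)
      have "0 = (\<Sum>i<n'. a' j' i * c' i)" using c'(2) j' by simp
      also have "\<dots> = (\<Sum>i<n'. a j i * c' i - a j n' / a j0 n' * (a j0 i * c' i))"
        by (rule sum.cong) (auto simp: a'_def j' algebra_simps)
      also have "\<dots> = (\<Sum>i<n'. a j i * c' i) - a j n' * t / a j0 n'"
        by (simp add: sum_subtractf sum_distrib_left sum_divide_distrib t_def)
      finally show ?thesis unfolding split by simp
    qed
    have "\<exists>i<Suc n'. c i \<noteq> 0" using c'(1) by (auto simp: c_def)
    with eq show ?thesis by blast
  qed
qed

definition vge :: "QT \<Rightarrow> int \<Rightarrow> bool" where
  "vge a k \<longleftrightarrow> (\<forall>n<k. a $$ n = 0)"

lemma vge_add: "vge a k \<Longrightarrow> vge b k \<Longrightarrow> vge (a + b) k"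
  by (simp add: vge_def)

lemma vge_diff: "vge a k \<Longrightarrow> vge b k \<Longrightarrow> vge (a - b) k"
  by (simp add: vge_def)

lemma vge_mono: "vge a k \<Longrightarrow> k' \<le> k \<Longrightarrow> vge a k'"
  by (simp add: vge_def)

lemma vge_subdeg: "vge a (fls_subdegree a)"
  by (simp add: vge_def)

lemma vge_le_subdeg: "vge a k \<Longrightarrow> a \<noteq> 0 \<Longrightarrow> k \<le> fls_subdegree a"
  by (rule fls_subdegree_geI) (auto simp: vge_def)

lemma vge_mult: "vge a i \<Longrightarrow> vge b j \<Longrightarrow> vge (a * b) (i + j)"
proof (cases "a = 0 \<or> b = 0")
  case True
  then show ?thesis by (auto simp: vge_def)
next
  case False
  assume "vge a i" "vge b j"
  with False have "i \<le> fls_subdegree a" "j \<le> fls_subdegree b" by (auto intro: vge_le_subdeg)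
  with False have "i + j \<le> fls_subdegree (a * b)" by simp
  then show ?thesis by (simp add: vge_def)
qed

lemma vge_degT: "vge a k \<Longrightarrow> degT a \<le> ereal (real_of_int (- k))"
proof (cases "a = 0")
  case True
  then show ?thesis by (simp add: degT_def)
next
  case False
  assume "vge a k"
  then have "k \<le> fls_subdegree a" using False by (rule vge_le_subdeg)
  with False show ?thesis by (simp add: degT_def)
qed

lemma poly_emb_K: "degree p \<le> K \<Longrightarrow> poly_emb p = (\<Sum>i\<le>K. fls_const (coeff p i) * fls_X_inv ^ i)"
  unfolding poly_emb_def
  by (rule sum.mono_neutral_left) (auto simp: coeff_eq_0)

lemma times_poly_emb_nth:
  assumes "degree q \<le> K"
  shows "(\<theta> * poly_emb q) $$ n = (\<Sum>i\<le>K. coeff q i * \<theta> $$ (n + int i))"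
proof -
  have "\<theta> * poly_emb q = (\<Sum>i\<le>K. fls_const (coeff q i) * (fls_X_inv ^ i * \<theta>))"
    by (simp add: poly_emb_K[OF assms] sum_distrib_left algebra_simps)
  also have "\<dots> = (\<Sum>i\<le>K. fls_const (coeff q i) * fls_shift (int i) \<theta>)"
    by (simp add: fls_X_inv_power_times_conv_shift)
  finally show ?thesis by (simp add: fls_nth_sum)
qed

lemma poly_emb_vge: "degree p \<le> N \<Longrightarrow> vge (poly_emb p) (- int N)"
  by (auto simp: vge_def poly_emb_nth coeff_eq_0)

lemma dirichlet:
  fixes \<theta> :: QT
  shows "\<exists>x y. y \<noteq> 0 \<and> degree y \<le> N \<and> vge (poly_emb x - \<theta> * poly_emb y) (int N + 1)"
proof -
  obtain c where c: "\<exists>i<Suc N. c i \<noteq> 0"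
    "\<forall>j<N. (\<Sum>i<Suc N. \<theta> $$ (int j + 1 + int i) * c i) = 0"
    using linsys[of N "Suc N" "\<lambda>j i. \<theta> $$ (int j + 1 + int i)"] by auto
  define y where "y = (\<Sum>i\<le>N. monom (c i) i)"
  have cy: "coeff y i = (if i \<le> N then c i else 0)" for i
    by (simp add: y_def coeff_sum coeff_monom)
  have y0: "y \<noteq> 0"
    using c(1) cy by (metis coeff_0 less_Suc_eq_le)
  have dy: "degree y \<le> N" by (rule degree_le) (simp add: cy)
  define \<phi> where "\<phi> = \<theta> * poly_emb y"
  have \<phi>n: "\<phi> $$ n = (\<Sum>i\<le>N. c i * \<theta> $$ (n + int i))" for n
    unfolding \<phi>_def by (simp add: times_poly_emb_nth[OF dy] cy)
  define M where "M = nat (- fls_subdegree \<phi>)"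
  define x where "x = (\<Sum>m\<le>M. monom (\<phi> $$ (- int m)) m)"
  have cx: "coeff x m = (if m \<le> M then \<phi> $$ (- int m) else 0)" for m
    by (simp add: x_def coeff_sum coeff_monom)
  have "vge (poly_emb x - \<phi>) (int N + 1)"
    unfolding vge_def
  proof (intro allI impI)
    fix n assume n: "n < int N + 1"
    show "(poly_emb x - \<phi>) $$ n = 0"
    proof (cases "n \<le> 0")
      case True
      show ?thesis
      proof (cases "nat (- n) \<le> M")
        case True2: True
        then show ?thesis using True by (simp add: poly_emb_nth cx)
      next
        case False
        then have "n < fls_subdegree \<phi>" using True by (simp add: M_def)
        then show ?thesis using True False by (simp add: poly_emb_nth cx)
      qed
    next
      case False
      then obtain j where j: "n = int j + 1" "j < N" using n
        by (intro that[of "nat (n - 1)"]) auto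
      have "\<phi> $$ n = (\<Sum>i<Suc N. \<theta> $$ (int j + 1 + int i) * c i)"
        unfolding \<phi>n j(1) lessThan_Suc_atMost by (simp add: mult.commute)
      also have "\<dots> = 0" using c(2) j(2) by blast
      finally show ?thesis using False by (simp add: poly_emb_nth)
    qed
  qed
  then show ?thesis using y0 dy unfolding \<phi>_def by blast
qed



lemma int_min_exists:
  fixes K :: "int set"
  assumes "k1 \<in> K" "\<And>k. k \<in> K \<Longrightarrow> L \<le> k"
  shows "\<exists>k0\<in>K. \<forall>k\<in>K. k0 \<le> k"
proof -
  define P where "P = (\<lambda>m::nat. L + int m \<in> K)"
  have "P (nat (k1 - L))" using assms by (simp add: P_def)
  then have P0: "P (LEAST m. P m)" by (rule LeastI)
  show ?thesis
  proof (intro bexI ballI)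
    show "L + int (LEAST m. P m) \<in> K" using P0 by (simp add: P_def)
    fix k assume "k \<in> K"
    then have "P (nat (k - L))" using assms(2)[of k] by (simp add: P_def)
    then have "(LEAST m. P m) \<le> nat (k - L)" by (rule Least_le)
    then show "L + int (LEAST m. P m) \<le> k" using assms(2)[OF \<open>k \<in> K\<close>] by linarith
  qed
qed

lemma witness:
  assumes D: "disc A B C = s ^ 2" and s0: "s \<noteq> 0"
  shows "\<exists>X Y. (X \<noteq> 0 \<or> Y \<noteq> 0) \<and> vge (qform A B C (poly_emb X) (poly_emb Y)) (fls_subdegree s + 1)"
proof (cases "A = 0")
  case True
  have "qform A B C (poly_emb 1) (poly_emb 0) = 0" using True by (simp add: qform_def)
  then show ?thesis by (intro exI[of _ 1] exI[of _ 0]) (simp add: vge_def)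
next
  case A0: False
  define \<theta>1 where "\<theta>1 = (- B + s) / (2 * A)"
  define \<theta>2 where "\<theta>2 = (- B - s) / (2 * A)"
  have Ceq: "C = (B^2 - s^2) / (4 * A)" using D A0 by (simp add: disc_def field_simps)
  have fact: "qform A B C x y = A * ((x - \<theta>1 * y) * (x - \<theta>2 * y))" for x y
    unfolding qform_def Ceq \<theta>1_def \<theta>2_def using A0 by (simp add: field_simps power2_eq_square)
  define a where "a = fls_subdegree A"
  define \<sigma> where "\<sigma> = fls_subdegree s"
  define N where "N = nat (\<sigma> - a)"
  obtain X Y where XY: "Y \<noteq> 0" "degree Y \<le> N" "vge (poly_emb X - \<theta>1 * poly_emb Y) (int N + 1)"
    using dirichlet by blast
  have sA: "vge (s / A) (\<sigma> - a)"
  proof -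
    have "fls_subdegree (s / A) = \<sigma> - a" using s0 A0
      by (simp add: divide_inverse \<sigma>_def a_def)
    then show ?thesis using vge_subdeg by metis
  qed
  have d2: "poly_emb X - \<theta>2 * poly_emb Y = (poly_emb X - \<theta>1 * poly_emb Y) + (s / A) * poly_emb Y"
    unfolding \<theta>1_def \<theta>2_def using A0 by (simp add: field_simps)
  have v2: "vge (poly_emb X - \<theta>2 * poly_emb Y) (\<sigma> - a - int N)"
    unfolding d2
  proof (rule vge_add)
    show "vge (poly_emb X - \<theta>1 * poly_emb Y) (\<sigma> - a - int N)"
      by (rule vge_mono[OF XY(3)]) (simp add: N_def)
    show "vge (s / A * poly_emb Y) (\<sigma> - a - int N)"
      using vge_mult[OF sA poly_emb_vge[OF XY(2)]] by simp
  qed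
  have "vge (A * ((poly_emb X - \<theta>1 * poly_emb Y) * (poly_emb X - \<theta>2 * poly_emb Y))) (a + ((int N + 1) + (\<sigma> - a - int N)))"
    by (rule vge_mult[OF _ vge_mult[OF XY(3) v2]]) (simp add: a_def vge_subdeg)
  then have "vge (qform A B C (poly_emb X) (poly_emb Y)) (\<sigma> + 1)"
    by (simp add: fact add.commute)
  then show ?thesis using XY(1) unfolding \<sigma>_def by blast
qed

lemma degT_cases: "degT a = - \<infinity> \<or> (\<exists>k::int. degT a = ereal (real_of_int k))"
  by (auto simp: degT_def intro: exI[of _ "- fls_subdegree a"])

lemma value_in:
  assumes ind: "indefinite A B C"
  shows "markov_value A B C \<in> {ereal (real n) | n :: nat. n \<ge> 1} \<union> {\<infinity>}"
proof -
  obtain s where D: "disc A B C = s ^ 2" and D0: "disc A B C \<noteq> 0"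
    using ind unfolding indefinite_def by blast
  have s0: "s \<noteq> 0" using D D0 by auto
  define e where "e = - fls_subdegree s"
  have "fls_subdegree (disc A B C) = 2 * fls_subdegree s"
    unfolding D by (simp add: fls_subdegree_pow)
  then have dD: "degT (disc A B C) / 2 = ereal (real_of_int e)"
    using D0 by (simp add: degT_def e_def)
  define S where "S = {degT (qform A B C (poly_emb X) (poly_emb Y)) | X Y :: rat poly. X \<noteq> 0 \<or> Y \<noteq> 0}"
  have mv: "markov_value A B C = ereal (real_of_int e) - Inf S"
    unfolding markov_value_def min_deg_def S_def dD ..
  obtain X Y where XY: "X \<noteq> 0 \<or> Y \<noteq> 0" "vge (qform A B C (poly_emb X) (poly_emb Y)) (fls_subdegree s + 1)"
    using witness[OF D s0] by blast
  define el where "el = degT (qform A B C (poly_emb X) (poly_emb Y))"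
  have elS: "el \<in> S" unfolding S_def el_def using XY(1) by blast
  have elle: "el \<le> ereal (real_of_int (e - 1))"
    unfolding el_def e_def using vge_degT[OF XY(2)] by simp
  have Sform: "z = - \<infinity> \<or> (\<exists>k::int. z = ereal (real_of_int k))" if "z \<in> S" for z
    using that degT_cases unfolding S_def by blast
  show ?thesis
  proof (cases "Inf S = - \<infinity>")
    case True
    then show ?thesis by (simp add: mv)
  next
    case False
    have "Inf S \<le> el" using elS by (rule Inf_lower)
    then have "Inf S \<le> ereal (real_of_int (e - 1))" using elle by order
    with False obtain r where r: "Inf S = ereal r" by (cases "Inf S") auto
    define K where "K = {k::int. ereal (real_of_int k) \<in> S}"
    have Sk: "\<exists>k\<in>K. z = ereal (real_of_int k)" if "z \<in> S" for z
    proof -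
      have "Inf S \<le> z" using that by (rule Inf_lower)
      then have "z \<noteq> - \<infinity>" using r by auto
      then show ?thesis using Sform[OF that] that unfolding K_def by auto
    qed
    obtain k1 where k1: "k1 \<in> K" "el = ereal (real_of_int k1)" using Sk[OF elS] by blast
    have Lb: "\<lfloor>r\<rfloor> \<le> k" if "k \<in> K" for k
    proof -
      have "Inf S \<le> ereal (real_of_int k)" using that unfolding K_def by (simp add: Inf_lower)
      then have "r \<le> real_of_int k" using r by simp
      then show ?thesis by linarith
    qed
    obtain k0 where k0: "k0 \<in> K" "\<forall>k\<in>K. k0 \<le> k"
      using int_min_exists[OF k1(1) Lb] by blast
    have IS: "Inf S = ereal (real_of_int k0)"
    proof (rule antisym)
      show "Inf S \<le> ereal (real_of_int k0)" using k0(1) unfolding K_def by (simp add: Inf_lower)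
      show "ereal (real_of_int k0) \<le> Inf S"
      proof (rule Inf_greatest)
        fix z assume "z \<in> S"
        then obtain k where "k \<in> K" "z = ereal (real_of_int k)" using Sk by blast
        then show "ereal (real_of_int k0) \<le> z" using k0(2) by simp
      qed
    qed
    have "k1 \<le> e - 1" using elle k1(2) by simp
    then have "k0 \<le> e - 1" using k0(2) k1(1) by force
    then have "markov_value A B C = ereal (real (nat (e - k0)))" "nat (e - k0) \<ge> 1"
      unfolding mv IS by simp_all
    then show ?thesis by blast
  qed
qed



definition gam :: QT where
  "gam = fps_to_fls (Abs_fps (\<lambda>n. if (\<exists>j. n = (2::nat) ^ j) then 1 else 0))"

lemma gam_nth: "n \<ge> 0 \<Longrightarrow> gam $$ n = (if (\<exists>j. nat n = (2::nat) ^ j) then 1 else 0)"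
  by (simp add: gam_def)

lemma gam_nz: "gam \<noteq> 0"
proof
  assume "gam = 0"
  moreover have "gam $$ 1 = 1" by (simp add: gam_nth) (rule exI[of _ 0], simp)
  ultimately show False by simp
qed

lemma notpow:
  assumes "(2::nat) ^ (J - 1) < m" "m < 2 ^ J"
  shows "\<not> (\<exists>j. m = 2 ^ j)"
proof
  assume "\<exists>j. m = 2 ^ j"
  then obtain j where j: "m = 2 ^ j" by blast
  have "J - 1 < j" using assms(1) unfolding j by (simp add: power_strict_increasing_iff)
  moreover have "j < J" using assms(2) unfolding j by (simp add: power_strict_increasing_iff)
  ultimately show False by simp
qed

lemma gam_irr: "\<not> in_QT_rat gam"
proof
  assume "in_QT_rat gam"
  then obtain p q where q0: "q \<noteq> 0" and eq: "gam * poly_emb q = poly_emb p"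
    unfolding in_QT_rat_def by blast
  define d where "d = degree q"
  define J where "J = d + 2"
  define n where "n = int (2 ^ J) - int d"
  have dlt: "d < 2 ^ d" by (rule less_exp)
  have pJ: "(2::nat) ^ J = 4 * 2 ^ d" by (simp add: J_def power_add)
  have dJ: "d < 2 ^ J" using dlt unfolding pJ by linarith
  then have "int d < int (2 ^ J)" by (simp only: of_nat_less_iff)
  then have n0: "n > 0" unfolding n_def by linarith
  have "(gam * poly_emb q) $$ n = (\<Sum>i\<le>d. coeff q i * gam $$ (n + int i))"
    by (rule times_poly_emb_nth) (simp add: d_def)
  also have "\<dots> = (\<Sum>i\<le>d. if i = d then coeff q i else 0)"
  proof (rule sum.cong[OF refl])
    fix i assume i: "i \<in> {..d}"
    have "n + int i = int (2 ^ J - d + i)"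
      using dJ unfolding n_def by (simp add: of_nat_diff less_imp_le)
    then have ni: "nat (n + int i) = 2 ^ J - d + i" "n + int i \<ge> 0" by simp_all
    show "coeff q i * gam $$ (n + int i) = (if i = d then coeff q i else 0)"
    proof (cases "i = d")
      case True
      then show ?thesis using ni by (simp add: gam_nth) (metis le_add_diff_inverse2 less_or_eq_imp_le dlt pJ less_le_trans
            le_add1 mult_2 mult_le_mono1 numeral_le_iff semiring_norm(69) numeral_Bit0)
    next
      case False
      have "(2::nat) ^ (J - 1) < 2 ^ J - d + i" "2 ^ J - d + i < (2::nat) ^ J"
        using False i unfolding J_def apply auto using dlt by linarith+
      then have "\<not> (\<exists>j. nat (n + int i) = 2 ^ j)" using ni(1) notpow by metis
      then show ?thesis using False ni by (simp add: gam_nth)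
    qed
  qed
  also have "\<dots> = coeff q d" by simp
  finally have "(gam * poly_emb q) $$ n = coeff q d" .
  moreover have "poly_emb p $$ n = 0" using n0 by (simp add: poly_emb_nth)
  ultimately show False using eq q0 by (simp add: d_def)
qed

lemma infty_in: "\<infinity> \<in> markov_spectrum"
proof -
  have bqf: "is_bqf 0 gam 0" using gam_irr by (simp add: is_bqf_def)
  have dsc: "disc 0 gam 0 = gam ^ 2" by (simp add: disc_def)
  have ind: "indefinite 0 gam 0" using gam_nz by (auto simp: indefinite_def dsc)
  have "min_deg 0 gam 0 \<le> degT (qform 0 gam 0 (poly_emb 1) (poly_emb 0))"
    unfolding min_deg_def by (rule Inf_lower) (rule CollectI, rule exI[of _ 1], rule exI[of _ 0], simp)
  then have md: "min_deg 0 gam 0 = - \<infinity>" by (simp add: qform_def degT_def)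
  have "markov_value 0 gam 0 = \<infinity>"
    unfolding markov_value_def md dsc using gam_nz by (simp add: degT_def)
  then show ?thesis using bqf ind unfolding markov_spectrum_def by force
qed

lemma poly_emb_subdeg_eq: "p \<noteq> 0 \<Longrightarrow> fls_subdegree (poly_emb p) = - int (degree p)"
  using poly_emb_subdeg[of p] vge_le_subdeg[OF poly_emb_vge[of p "degree p"] poly_emb_nonzero[of p]]
  by simp

lemma order_sq: "x \<noteq> 0 \<Longrightarrow> order a (x ^ 2) = 2 * order a x"
  by (simp add: power2_eq_square order_mult)

lemma nonsq:
  fixes X Y :: "rat poly"
  assumes "X \<noteq> 0 \<or> Y \<noteq> 0"
  shows "X ^ 2 - ([:0,1:] ^ (2 * k + 1) * [:1,1:]) * Y ^ 2 \<noteq> 0"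
proof
  assume eq0: "X ^ 2 - ([:0,1:] ^ (2 * k + 1) * [:1,1:]) * Y ^ 2 = 0"
  then have eq: "X ^ 2 = ([:0,1:] ^ (2 * k + 1) * [:1,1:]) * Y ^ 2" by simp
  show False
  proof (cases "Y = 0")
    case True
    then show False using eq assms by simp
  next
    case False
    have h1: "[:0,1:] \<noteq> (0::rat poly)" "[:1,1:] \<noteq> (0::rat poly)" by simp_all
    have nz: "[:0,1:] ^ (2 * k + 1) * [:1,1:] * Y ^ 2 \<noteq> (0 :: rat poly)"
      by (intro no_zero_divisors power_not_zero h1 False)
    then have X0: "X \<noteq> 0" using eq by auto
    have o1: "order 0 ([:0,1:] ^ (2 * k + 1) :: rat poly) = 2 * k + 1"
      using order_power_n_n[of "0::rat" "2 * k + 1"] by simp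
    have o2: "order 0 ([:1,1:] :: rat poly) = 0" by (rule order_0I) simp
    have "order 0 (X ^ 2) = order 0 ([:0,1:] ^ (2 * k + 1) * [:1,1:] * Y ^ 2)" using eq by simp
    also have "\<dots> = 2 * k + 1 + 2 * order 0 Y"
    proof -
      have a1: "order 0 ([:0,1:] ^ (2 * k + 1) * [:1,1:] * Y ^ 2) =
          order 0 ([:0,1:] ^ (2 * k + 1) * [:1,1:] :: rat poly) + order 0 (Y ^ 2)"
        by (rule order_mult[OF nz])
      have a2: "order 0 ([:0,1:] ^ (2 * k + 1) * [:1,1:] :: rat poly) =
          order 0 ([:0,1:] ^ (2 * k + 1) :: rat poly) + order 0 ([:1,1:] :: rat poly)"
        by (rule order_mult) (intro no_zero_divisors power_not_zero h1)
      show ?thesis unfolding a1 a2 o1 o2 order_sq[OF False] by simp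
    qed
    finally show False using order_sq[OF X0, of 0] by presburger
  qed
qed

lemma emb_X: "poly_emb [:0,1:] = fls_X_inv"
proof -
  have "[:0,1:] = pCons 0 (1 :: rat poly)" by simp
  then show ?thesis by (simp only: poly_emb_pCons0 poly_emb_1 mult_1_right)
qed

lemma emb_1X: "poly_emb [:1,1:] = 1 + fls_X_inv"
proof -
  have "[:1,1:] = 1 + [:0,1::rat:]" by (simp add: one_pCons)
  then show ?thesis by (simp only: poly_emb_add poly_emb_1 emb_X)
qed

lemma TX: "fls_X_inv * (fls_X :: QT) = 1"
  by (simp add: fls_inverse_X[symmetric])

lemma pow_id:
  fixes t x :: QT
  assumes "t * x = 1"
  shows "t ^ (2 * k + 2) * (1 + x) = t ^ (2 * k + 1) * (1 + t)"
proof -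
  have "t ^ (2 * k + 2) * (1 + x) = t ^ (2 * k + 1) * (t + t * x)"
    by (simp add: algebra_simps)
  then show ?thesis using assms by (simp add: add.commute)
qed

lemma fin_in: "ereal (real (Suc k)) \<in> markov_spectrum"
proof -
  define dp :: "rat poly" where "dp = [:0,1:] ^ (2 * k + 1) * [:1,1:]"
  define E where "E = poly_emb dp"
  define g where "g = fls_subdegree gam"
  have dp0: "dp \<noteq> 0" unfolding dp_def by (intro no_zero_divisors power_not_zero) simp_all
  have ddp: "degree dp = 2 * k + 2"
    unfolding dp_def by (subst degree_mult_eq) (simp_all add: degree_linear_power)
  have Eeq: "E = fls_X_inv ^ (2 * k + 1) * (1 + fls_X_inv)"
    unfolding E_def dp_def by (simp only: poly_emb_mult poly_emb_power emb_X emb_1X)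
  have sE: "fls_subdegree E = - int (2 * k + 2)"
    unfolding E_def using poly_emb_subdeg_eq[OF dp0] ddp by simp
  obtain \<sigma>0 :: "rat fps" where \<sigma>0: "\<sigma>0 ^ 2 = 1 + fps_X"
  proof -
    have rad: "(fps_radical (\<lambda>_ _. 1) (Suc 1) (1 + fps_X :: rat fps)) ^ Suc 1 = 1 + fps_X"
      by (rule power_radical[THEN iffD1]) simp_all
    then show ?thesis using that by (metis Suc_1)
  qed
  define \<sigma> where "\<sigma> = fps_to_fls \<sigma>0"
  have \<sigma>sq: "\<sigma> ^ 2 = 1 + fls_X"
    unfolding \<sigma>_def fps_to_fls_power[symmetric] \<sigma>0 by simp
  define s where "s = 2 * gam * fls_X_inv ^ (k + 1) * \<sigma>"
  have pk: "(fls_X_inv ^ (k + 1)) ^ 2 = (fls_X_inv :: QT) ^ (2 * k + 2)"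
  proof -
    have "(fls_X_inv ^ (k + 1)) ^ 2 = (fls_X_inv :: QT) ^ ((k + 1) * 2)"
      by (simp only: power_mult)
    also have "(k + 1) * 2 = 2 * k + 2" by simp
    finally show ?thesis .
  qed
  have "s ^ 2 = 4 * gam ^ 2 * ((fls_X_inv ^ (k + 1)) ^ 2 * \<sigma> ^ 2)"
    unfolding s_def by (simp add: power_mult_distrib)
  then have "s ^ 2 = 4 * gam ^ 2 * (fls_X_inv ^ (2 * k + 2) * \<sigma> ^ 2)"
    unfolding pk .
  also have "\<dots> = 4 * gam ^ 2 * E"
    unfolding \<sigma>sq Eeq pow_id[OF TX] ..
  finally have sq: "disc gam 0 (- (gam * E)) = s ^ 2"
    by (simp add: disc_def power2_eq_square algebra_simps)
  have D0: "disc gam 0 (- (gam * E)) \<noteq> 0"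
    using gam_nz poly_emb_nonzero[OF dp0] by (simp add: disc_def E_def)
  have ind: "indefinite gam 0 (- (gam * E))" using sq D0 by (auto simp: indefinite_def)
  have bqf: "is_bqf gam 0 (- (gam * E))" using gam_irr by (simp add: is_bqf_def)
  have sD: "fls_subdegree (disc gam 0 (- (gam * E))) = 2 * g - int (2 * k + 2)"
  proof -
    have "disc gam 0 (- (gam * E)) = 4 * (gam * gam * E)" by (simp add: disc_def power2_eq_square algebra_simps)
    moreover have "E \<noteq> 0" unfolding E_def using poly_emb_nonzero[OF dp0] .
    ultimately show ?thesis using gam_nz sE by (simp add: g_def)
  qed
  have dD: "degT (disc gam 0 (- (gam * E))) / 2 = ereal (real_of_int (int k + 1 - g))"
    using D0 sD by (simp add: degT_def)
  have qf: "qform gam 0 (- (gam * E)) (poly_emb X) (poly_emb Y) = gam * poly_emb (X ^ 2 - dp * Y ^ 2)" for X Y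
    by (simp add: qform_def E_def poly_emb_diff poly_emb_mult poly_emb_power algebra_simps)
  have md: "min_deg gam 0 (- (gam * E)) = ereal (real_of_int (- g))"
    unfolding min_deg_def
  proof (rule antisym)
    have eq1: "degT (qform gam 0 (- (gam * E)) (poly_emb 1) (poly_emb 0)) = ereal (real_of_int (- g))"
    proof -
      have "qform gam 0 (- (gam * E)) (poly_emb 1) (poly_emb 0) = gam"
        by (simp add: qform_def)
      then show ?thesis unfolding degT_def g_def using gam_nz by simp
    qed
    have mem1: "degT (qform gam 0 (- (gam * E)) (poly_emb 1) (poly_emb 0)) \<in>
        {degT (qform gam 0 (- (gam * E)) (poly_emb X) (poly_emb Y)) |X Y. X \<noteq> 0 \<or> Y \<noteq> 0}"
      by (rule CollectI, rule exI[of _ 1], rule exI[of _ 0], simp)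
    show "Inf {degT (qform gam 0 (- (gam * E)) (poly_emb X) (poly_emb Y)) |X Y. X \<noteq> 0 \<or> Y \<noteq> 0}
        \<le> ereal (real_of_int (- g))"
      by (rule Inf_lower2[OF mem1]) (simp only: eq1 order_refl)
    show "ereal (real_of_int (- g)) \<le> Inf {degT (qform gam 0 (- (gam * E)) (poly_emb X) (poly_emb Y)) |X Y. X \<noteq> 0 \<or> Y \<noteq> 0}"
    proof (rule Inf_greatest)
      fix z assume "z \<in> {degT (qform gam 0 (- (gam * E)) (poly_emb X) (poly_emb Y)) |X Y. X \<noteq> 0 \<or> Y \<noteq> 0}"
      then obtain X Y where XY: "X \<noteq> 0 \<or> Y \<noteq> 0" "z = degT (gam * poly_emb (X ^ 2 - dp * Y ^ 2))"
        by (auto simp: qf)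
      have R0: "X ^ 2 - dp * Y ^ 2 \<noteq> 0" using nonsq[OF XY(1), of k] by (simp add: dp_def)
      have "z = ereal (real_of_int (- (g - int (degree (X ^ 2 - dp * Y ^ 2)))))"
        using XY(2) R0 gam_nz poly_emb_nonzero[OF R0] poly_emb_subdeg_eq[OF R0]
        by (simp add: degT_def g_def)
      then show "ereal (real_of_int (- g)) \<le> z" by simp
    qed
  qed
  have "markov_value gam 0 (- (gam * E)) = ereal (real (Suc k))"
    unfolding markov_value_def dD md by simp
  then show ?thesis using bqf ind unfolding markov_spectrum_def by force
qed

theorem corollary3:
  shows "markov_spectrum = {ereal (real n) | n :: nat. n \<ge> 1} \<union> {\<infinity>}"
proof
  show "markov_spectrum \<subseteq> {ereal (real n) | n :: nat. n \<ge> 1} \<union> {\<infinity>}"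
    unfolding markov_spectrum_def using value_in by blast
  show "{ereal (real n) | n :: nat. n \<ge> 1} \<union> {\<infinity>} \<subseteq> markov_spectrum"
  proof
    fix v assume "v \<in> {ereal (real n) | n :: nat. n \<ge> 1} \<union> {\<infinity>}"
    then consider "v = \<infinity>" | n where "n \<ge> 1" "v = ereal (real n)" by blast
    then show "v \<in> markov_spectrum"
    proof cases
      case 1
      then show ?thesis using infty_in by simp
    next
      case 2
      then have "v = ereal (real (Suc (n - 1)))" by simp
      then show ?thesis using fin_in by simp
    qed
  qed
qed

end
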